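(* If $G$ is an infinite $2$-edge-connected graph, then $G$ is cat-win.
   Context: Cat Herding is played on a simple, possibly infinite graph $G$. The cat first places its token on a vertex. Then the players alternate, the herder moving first: the herder deletes one edge of the current graph, and then, unless the cat's current vertex has degree $0$ in the current graph, the cat moves its token along a finite path with at least one edge in the current graph to a different vertex. The cat is captured when its vertex has degree $0$ in the current graph. $G$ is cat-win if the cat has a strategy that is never captured, and herder-win if the herder has a strategy that eventually captures the cat. A graph is $2$-edge-connected if every pair of vertices is joined by at least $2$ edge-disjoint finite paths (equivalently, it is connected and has no disconnecting set of fewer than $2$ edges). *)

theory Defs
  imports Main
begin

definition simple_graph :: "'a set \<Rightarrow> 'a set set \<Rightarrow> bool" where
  "simple_graph V E \<longleftrightarrow> (\<forall>e\<in>E. \<exists>u v. e = {u, v} \<and> u \<noteq> v \<and> u \<in> V \<and> v \<in> V)"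

definition is_path :: "'a set set \<Rightarrow> 'a list \<Rightarrow> 'a \<Rightarrow> 'a \<Rightarrow> bool" where
  "is_path F p u w \<longleftrightarrow> length p \<ge> 2 \<and> distinct p \<and> hd p = u \<and> last p = w \<and>
     (\<forall>i. Suc i < length p \<longrightarrow> {p ! i, p ! Suc i} \<in> F)"

definition graph_connected :: "'a set \<Rightarrow> 'a set set \<Rightarrow> bool" where
  "graph_connected V E \<longleftrightarrow> (\<forall>u\<in>V. \<forall>v\<in>V. u \<noteq> v \<longrightarrow> (\<exists>p. is_path E p u v))"

definition two_edge_connected :: "'a set \<Rightarrow> 'a set set \<Rightarrow> bool" where
  "two_edge_connected V E \<longleftrightarrow> graph_connected V E \<and>
     (\<forall>S \<subseteq> E. finite S \<and> card S < 2 \<longrightarrow> graph_connected V (E - S))"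

definition isolated :: "'a set set \<Rightarrow> 'a \<Rightarrow> bool" where
  "isolated F c \<longleftrightarrow> \<not> (\<exists>e\<in>F. c \<in> e)"

text \<open>The herder's play is a sequence h of edges, h n being the edge deleted in
  round n.  A cat strategy consists of a start vertex v0 and a map \<sigma> from the list of herder
  deletions so far (most recent last) to the cat's next vertex (the cat's own moves are
  determined by the strategy, so this is fully general).\<close>

fun cat_pos :: "'a \<Rightarrow> ('a set list \<Rightarrow> 'a) \<Rightarrow> (nat \<Rightarrow> 'a set) \<Rightarrow> nat \<Rightarrow> 'a" where
  "cat_pos v0 \<sigma> h 0 = v0"
| "cat_pos v0 \<sigma> h (Suc n) = \<sigma> (map h [0..<Suc n])"

definition cat_winning_strategy ::
  "'a set \<Rightarrow> 'a set set \<Rightarrow> 'a \<Rightarrow> ('a set list \<Rightarrow> 'a) \<Rightarrow> bool" where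
  "cat_winning_strategy V E v0 \<sigma> \<longleftrightarrow> v0 \<in> V \<and> \<not> isolated E v0 \<and>
     (\<forall>h n. (\<forall>k\<le>n. h k \<in> E - h ` {..<k}) \<longrightarrow>
        (let F = E - h ` {..n}; c = cat_pos v0 \<sigma> h n in
          \<not> isolated F c \<and> (\<exists>p. is_path F p c (cat_pos v0 \<sigma> h (Suc n)))))"

definition cat_win :: "'a set \<Rightarrow> 'a set set \<Rightarrow> bool" where
  "cat_win V E \<longleftrightarrow> (\<exists>v0 \<sigma>. cat_winning_strategy V E v0 \<sigma>)"

end

theory Submission
  imports Defs
begin

definition adj :: "'a set set \<Rightarrow> 'a \<Rightarrow> 'a \<Rightarrow> bool" where
  "adj F x y \<longleftrightarrow> {x, y} \<in> F \<and> x \<noteq> y"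

definition cmp :: "'a set set \<Rightarrow> 'a \<Rightarrow> 'a set" where
  "cmp F x = {y. (adj F)\<^sup>*\<^sup>* x y}"

definition good :: "'a set set \<Rightarrow> 'a \<Rightarrow> bool" where
  "good F v \<longleftrightarrow> (\<forall>g\<in>F. infinite (cmp (F - {g}) v))"

definition pedges :: "'a list \<Rightarrow> 'a set set" where
  "pedges p = (\<lambda>i. {p ! i, p ! Suc i}) ` {i. Suc i < length p}"

lemma adj_sym: "adj F x y \<Longrightarrow> adj F y x"
  unfolding adj_def by (auto simp: insert_commute)

lemma reach_sym: "(adj F)\<^sup>*\<^sup>* x y \<Longrightarrow> (adj F)\<^sup>*\<^sup>* y x"
proof (induction rule: rtranclp_induct)
  case base then show ?case by simp
next
  case (step y z) then show ?case
    by (meson adj_sym converse_rtranclp_into_rtranclp)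
qed

lemma reach_mono: "(adj F)\<^sup>*\<^sup>* x y \<Longrightarrow> F \<subseteq> F' \<Longrightarrow> (adj F')\<^sup>*\<^sup>* x y"
proof (induction rule: rtranclp_induct)
  case base then show ?case by simp
next
  case (step y z) then show ?case
    by (metis (no_types, lifting) adj_def rtranclp.rtrancl_into_rtrancl subset_eq)
qed

lemma crossing: "(adj F)\<^sup>*\<^sup>* x y \<Longrightarrow> x \<in> X \<Longrightarrow> y \<notin> X \<Longrightarrow> \<exists>a b. adj F a b \<and> a \<in> X \<and> b \<notin> X"
proof (induction rule: rtranclp_induct)
  case base then show ?case by simp
next
  case (step y z) then show ?case by blast
qed

lemma comp_eq: "y \<in> cmp F x \<Longrightarrow> cmp F y = cmp F x"
proof -
  assume "y \<in> cmp F x"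
  then have xy: "(adj F)\<^sup>*\<^sup>* x y" "(adj F)\<^sup>*\<^sup>* y x" unfolding cmp_def using reach_sym by auto
  show ?thesis unfolding cmp_def
  proof (intro set_eqI iffI; simp)
    fix z assume "(adj F)\<^sup>*\<^sup>* y z" then show "(adj F)\<^sup>*\<^sup>* x z" using xy(1) by (rule rtranclp_trans[rotated])
  next
    fix z assume "(adj F)\<^sup>*\<^sup>* x z" then show "(adj F)\<^sup>*\<^sup>* y z" using xy(2) by (rule rtranclp_trans[rotated])
  qed
qed

lemma reach_of_path_aux:
  "(\<forall>i. Suc i < length p \<longrightarrow> adj F (p ! i) (p ! Suc i)) \<Longrightarrow> p \<noteq> [] \<Longrightarrow> (adj F)\<^sup>*\<^sup>* (hd p) (last p)"
proof (induction p)
  case Nil then show ?case by simp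
next
  case (Cons a p)
  show ?case
  proof (cases "p = []")
    case True then show ?thesis by simp
  next
    case False
    have "adj F a (hd p)" using Cons.prems(1)[rule_format, of 0] False
      by (simp add: hd_conv_nth)
    moreover have "(adj F)\<^sup>*\<^sup>* (hd p) (last p)"
      using Cons.IH Cons.prems(1) False by fastforce
    ultimately show ?thesis using False by (simp add: converse_rtranclp_into_rtranclp)
  qed
qed

lemma reach_of_path: "is_path F p u w \<Longrightarrow> (adj F)\<^sup>*\<^sup>* u w"
proof -
  assume a: "is_path F p u w"
  have "\<forall>i. Suc i < length p \<longrightarrow> adj F (p ! i) (p ! Suc i)"
    using a unfolding is_path_def adj_def by (auto simp: nth_eq_iff_index_eq)
  moreover have "p \<noteq> []" using a unfolding is_path_def by auto
  ultimately have "(adj F)\<^sup>*\<^sup>* (hd p) (last p)" by (rule reach_of_path_aux)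
  moreover have "hd p = u" "last p = w" using a unfolding is_path_def by auto
  ultimately show ?thesis by simp
qed

lemma path_of_reach_aux: "(adj F)\<^sup>*\<^sup>* u w \<Longrightarrow> u = w \<or> (\<exists>p. is_path F p u w)"
proof (induction rule: converse_rtranclp_induct)
  case base then show ?case by simp
next
  case (step y z)
  have yz: "{y, z} \<in> F" "y \<noteq> z" using step.hyps(1) unfolding adj_def by auto
  from step.IH show ?case
  proof
    assume "z = w"
    then have "is_path F [y, w] y w" using yz unfolding is_path_def
      by (auto simp: less_Suc_eq)
    then show ?thesis by blast
  next
    assume "\<exists>p. is_path F p z w"
    then obtain p where p: "is_path F p z w" by blast
    show ?thesis
    proof (cases "y \<in> set p")
      case True
      then obtain i where i: "i < length p" "p ! i = y" by (meson in_set_conv_nth)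
      show ?thesis
      proof (cases "y = w")
        case True then show ?thesis by simp
      next
        case False
        let ?q = "drop i p"
        have "length ?q \<ge> 2"
        proof (rule ccontr)
          assume "\<not> 2 \<le> length ?q"
          then have "length ?q = 1" using i by simp
          then have "Suc i = length p" by simp
          then have "last p = p ! i" by (metis diff_Suc_1 last_conv_nth list.size(3) nat.distinct(1))
          then show False using p i False unfolding is_path_def by simp
        qed
        moreover have "hd ?q = y" using i by (simp add: hd_drop_conv_nth)
        moreover have "last ?q = w" using p i unfolding is_path_def by simp
        moreover have "distinct ?q" using p unfolding is_path_def by simp
        moreover have "\<forall>j. Suc j < length ?q \<longrightarrow> {?q ! j, ?q ! Suc j} \<in> F"
          using p i unfolding is_path_def by auto
        ultimately have "is_path F ?q y w" unfolding is_path_def by simp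
        then show ?thesis by blast
      qed
    next
      case False
      let ?q = "y # p"
      have pne: "p \<noteq> []" using p unfolding is_path_def by auto
      have "\<forall>j. Suc j < length ?q \<longrightarrow> {?q ! j, ?q ! Suc j} \<in> F"
      proof (intro allI impI)
        fix j assume j: "Suc j < length ?q"
        show "{?q ! j, ?q ! Suc j} \<in> F"
        proof (cases j)
          case 0 then show ?thesis using yz p pne unfolding is_path_def by (simp add: hd_conv_nth)
        next
          case (Suc j') then show ?thesis using p j unfolding is_path_def by auto
        qed
      qed
      then have "is_path F ?q y w" using p False pne unfolding is_path_def by auto
      then show ?thesis by blast
    qed
  qed
qed

lemma path_of_reach: "(adj F)\<^sup>*\<^sup>* u w \<Longrightarrow> u \<noteq> w \<Longrightarrow> \<exists>p. is_path F p u w"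
  using path_of_reach_aux[of F u w] by blast

lemma path_avoid: "is_path F p u w \<Longrightarrow> g \<notin> pedges p \<Longrightarrow> is_path (F - {g}) p u w"
  unfolding is_path_def pedges_def by auto

lemma finite_pedges: "finite (pedges p)"
proof -
  have "finite {i. Suc i < length p}" by (rule finite_subset[of _ "{..<length p}"]) auto
  then show ?thesis unfolding pedges_def by simp
qed


lemma edge_sub: "simple_graph V E \<Longrightarrow> e \<in> E \<Longrightarrow> e \<subseteq> V"
  unfolding simple_graph_def by fastforce

lemma edge_V: "simple_graph V E \<Longrightarrow> adj F a b \<Longrightarrow> F \<subseteq> E \<Longrightarrow> a \<in> V \<and> b \<in> V"
proof -
  assume a: "simple_graph V E" "adj F a b" "F \<subseteq> E"
  then have "{a, b} \<in> E" unfolding adj_def by auto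
  then have "{a, b} \<subseteq> V" using edge_sub a(1) by blast
  then show ?thesis by simp
qed

lemma reach_V: "(adj F)\<^sup>*\<^sup>* x y \<Longrightarrow> simple_graph V E \<Longrightarrow> F \<subseteq> E \<Longrightarrow> x \<in> V \<Longrightarrow> y \<in> V"
  by (induction rule: rtranclp_induct) (auto dest: edge_V)

lemma reach_start: "(adj F)\<^sup>*\<^sup>* x y \<Longrightarrow> x \<noteq> y \<Longrightarrow> \<exists>z. adj F x z"
  by (induction rule: converse_rtranclp_induct) auto

lemma comp_inf_V: "infinite (cmp F x) \<Longrightarrow> simple_graph V E \<Longrightarrow> F \<subseteq> E \<Longrightarrow> x \<in> V"
proof -
  assume a: "infinite (cmp F x)" "simple_graph V E" "F \<subseteq> E"
  have "infinite (cmp F x - {x})" using a(1) by simp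
  then obtain y where "y \<in> cmp F x - {x}" using infinite_imp_nonempty by blast
  then have r: "(adj F)\<^sup>*\<^sup>* x y" and ne: "x \<noteq> y" unfolding cmp_def by auto
  obtain z where "adj F x z" using reach_start[OF r ne] by blast
  then show ?thesis using edge_V[OF a(2) _ a(3)] by blast
qed

lemma conn_reach: "graph_connected V F \<Longrightarrow> x \<in> V \<Longrightarrow> y \<in> V \<Longrightarrow> (adj F)\<^sup>*\<^sup>* x y"
  unfolding graph_connected_def using reach_of_path by (metis rtranclp.rtrancl_refl)

lemma conn_minus: "two_edge_connected V E \<Longrightarrow> graph_connected V (E - {g})"
proof -
  assume a: "two_edge_connected V E"
  show ?thesis
  proof (cases "g \<in> E")
    case True
    have "{g} \<subseteq> E \<and> finite {g} \<and> card {g} < 2" using True by simp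
    then show ?thesis using a unfolding two_edge_connected_def by blast
  next
    case False then show ?thesis using a unfolding two_edge_connected_def by simp
  qed
qed

lemma ppoint:
  assumes sg: "simple_graph V E" and tec: "two_edge_connected V E"
    and x: "x \<in> V" and y: "y \<in> V" "y \<notin> cmp (E - D - {g}) x"
  shows "\<exists>d\<in>D. \<exists>p\<in>d. p \<in> cmp (E - D - {g}) x"
proof -
  let ?X = "cmp (E - D - {g}) x"
  have r: "(adj (E - {g}))\<^sup>*\<^sup>* x y" using conn_reach[OF conn_minus[OF tec] x y(1)] .
  have xX: "x \<in> ?X" unfolding cmp_def by simp
  obtain a b where ab: "adj (E - {g}) a b" "a \<in> ?X" "b \<notin> ?X"
    using crossing[OF r xX y(2)] by blast
  have "{a, b} \<in> D"
  proof (rule ccontr)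
    assume "{a, b} \<notin> D"
    then have "adj (E - D - {g}) a b" using ab(1) unfolding adj_def by auto
    then have "b \<in> ?X" using ab(2) unfolding cmp_def by (auto intro: rtranclp.rtrancl_into_rtrancl)
    then show False using ab(3) by simp
  qed
  then show ?thesis using ab(2) by blast
qed


lemma exists_good:
  assumes sg: "simple_graph V E" and tec: "two_edge_connected V E" and infV: "infinite V"
    and fD: "finite D" and DE: "D \<subseteq> E" and inf: "infinite (cmp (E - D) c)"
  shows "\<exists>c'. c' \<noteq> c \<and> (adj (E - D))\<^sup>*\<^sup>* c c' \<and> good (E - D) c'"
proof -
  define F where "F = E - D"
  define K where "K = cmp F c"
  have FE: "F \<subseteq> E" unfolding F_def by auto
  have infK: "infinite K" using inf unfolding K_def F_def .
  have cV: "c \<in> V" using comp_inf_V[OF inf sg] by auto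
  have KV: "K \<subseteq> V" unfolding K_def cmp_def using reach_V[OF _ sg FE cV] by auto
  have Kreach: "(adj F)\<^sup>*\<^sup>* x y" if "x \<in> K" "y \<in> K" for x y
  proof -
    have "(adj F)\<^sup>*\<^sup>* c x" "(adj F)\<^sup>*\<^sup>* c y" using that unfolding K_def cmp_def by auto
    then show ?thesis using reach_sym[of F c x] rtranclp_trans[of "adj F" x c y] by blast
  qed
  define P where "P = {p \<in> K. \<exists>d\<in>D. p \<in> d}"
  have finD: "finite d" if "d \<in> D" for d
  proof -
    have dE: "d \<in> E" using that DE by auto
    have "\<forall>e\<in>E. \<exists>u v. e = {u, v} \<and> u \<noteq> v \<and> u \<in> V \<and> v \<in> V" using sg unfolding simple_graph_def .
    then have "\<exists>u v. d = {u, v} \<and> u \<noteq> v \<and> u \<in> V \<and> v \<in> V" using dE by (rule bspec)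
    then show ?thesis by auto
  qed
  have "finite (\<Union>D)" by (rule finite_Union[OF fD finD])
  moreover have "P \<subseteq> \<Union>D" unfolding P_def by blast
  ultimately have finP: "finite P" by (rule finite_subset[rotated])
  define pi where "pi p q = (SOME r. is_path F r p q)" for p q
  define Gs where "Gs = (\<Union>pq\<in>{pq \<in> P \<times> P. fst pq \<noteq> snd pq}. pedges (pi (fst pq) (snd pq)))"
  have finGs: "finite Gs" unfolding Gs_def
    by (rule finite_UN_I) (auto intro: finite_subset[of _ "P \<times> P"] finP finite_pedges)
  have finGs_el: "finite g" if "g \<in> Gs" for g
    using that unfolding Gs_def pedges_def by auto
  define Bd where "Bd = (\<Union>g\<in>Gs. \<Union>u\<in>g. (if finite (cmp (F - {g}) u) then cmp (F - {g}) u else {}))"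
  have finBd: "finite Bd" unfolding Bd_def
    by (rule finite_UN_I[OF finGs]) (auto intro: finGs_el)
  have claim: "good F v" if vK: "v \<in> K" "v \<notin> Bd" for v
  proof (rule ccontr)
    assume "\<not> good F v"
    then obtain g where gF: "g \<in> F" and finA: "finite (cmp (F - {g}) v)" unfolding good_def by blast
    define A where "A = cmp (F - {g}) v"
    have vA: "v \<in> A" unfolding A_def cmp_def by simp
    have AK: "A \<subseteq> K"
    proof
      fix z assume "z \<in> A"
      then have "(adj F)\<^sup>*\<^sup>* v z" unfolding A_def cmp_def using reach_mono[of "F - {g}" v z F] by auto
      moreover have "(adj F)\<^sup>*\<^sup>* c v" using vK unfolding K_def cmp_def by simp
      ultimately show "z \<in> K" unfolding K_def cmp_def by (simp add: rtranclp_trans)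
    qed
    have "infinite (K - A)" using infK finA unfolding A_def by (simp add: Diff_infinite_finite)
    then obtain y where y: "y \<in> K" "y \<notin> A" using infinite_imp_nonempty by blast
    have "(adj F)\<^sup>*\<^sup>* v y" using Kreach vK y by blast
    then obtain a b where ab: "adj F a b" "a \<in> A" "b \<notin> A" using crossing[OF _ vA y(2)] by blast
    have gab: "g = {a, b}"
    proof (rule ccontr)
      assume "g \<noteq> {a, b}"
      then have "adj (F - {g}) a b" using ab(1) unfolding adj_def by auto
      then have "b \<in> A" using ab(2) unfolding A_def cmp_def by (auto intro: rtranclp.rtrancl_into_rtrancl)
      then show False using ab(3) by simp
    qed
    have Aa: "cmp (F - {g}) a = A" using comp_eq ab(2) unfolding A_def by metis
    define A2 where "A2 = cmp (F - {g}) b"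
    have A2A: "z \<notin> A" if "z \<in> A2" for z
    proof
      assume "z \<in> A"
      then have "(adj (F - {g}))\<^sup>*\<^sup>* v z" unfolding A_def cmp_def by simp
      moreover have "(adj (F - {g}))\<^sup>*\<^sup>* z b" using that reach_sym unfolding A2_def cmp_def by auto
      ultimately have "b \<in> A" unfolding A_def cmp_def by (simp add: rtranclp_trans)
      then show False using ab(3) by simp
    qed
    have bA2: "b \<in> A2" unfolding A2_def cmp_def by simp
    have abV: "a \<in> V" "b \<in> V" using edge_V[OF sg ab(1) FE] by auto
    have "infinite (V - A)" using infV finA unfolding A_def by (simp add: Diff_infinite_finite)
    then obtain y' where y': "y' \<in> V" "y' \<notin> A" using infinite_imp_nonempty by blast
    have vV: "v \<in> V" using KV vK by auto
    obtain d p where dp: "d \<in> D" "p \<in> d" "p \<in> A"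
      using ppoint[OF sg tec vV y'(1), of D g] y'(2) unfolding A_def F_def by blast
    have aA2: "a \<notin> A2" using A2A ab(2) by blast
    obtain d2 q where dq: "d2 \<in> D" "q \<in> d2" "q \<in> A2"
      using ppoint[OF sg tec abV(2) abV(1), of D g] aA2 unfolding A2_def F_def by blast
    have pP: "p \<in> P" using dp AK unfolding P_def by auto
    have aK: "a \<in> K" using ab(2) AK by auto
    have qK: "q \<in> K"
    proof -
      have "(adj F)\<^sup>*\<^sup>* b q" using dq(3) unfolding A2_def cmp_def using reach_mono[of "F - {g}" b q F] by auto
      moreover have "(adj F)\<^sup>*\<^sup>* c a" using aK unfolding K_def cmp_def by simp
      moreover note ab(1)
      ultimately have "(adj F)\<^sup>*\<^sup>* c q"
        by (meson rtranclp.rtrancl_into_rtrancl rtranclp_trans)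
      then show ?thesis unfolding K_def cmp_def by simp
    qed
    have qP: "q \<in> P" using dq qK unfolding P_def by auto
    have qA: "q \<notin> A" using A2A dq(3) by blast
    have pq: "p \<noteq> q" using dp(3) qA by auto
    have "\<exists>r. is_path F r p q" using path_of_reach[OF Kreach pq] pP qP unfolding P_def by auto
    then have pth: "is_path F (pi p q) p q" unfolding pi_def by (rule someI_ex)
    have gpe: "g \<in> pedges (pi p q)"
    proof (rule ccontr)
      assume "g \<notin> pedges (pi p q)"
      then have "is_path (F - {g}) (pi p q) p q" by (rule path_avoid[OF pth])
      then have "(adj (F - {g}))\<^sup>*\<^sup>* p q" by (rule reach_of_path)
      then have "q \<in> cmp (F - {g}) p" unfolding cmp_def by simp
      moreover have "cmp (F - {g}) p = A" using comp_eq dp(3) unfolding A_def by metis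
      ultimately show False using qA by simp
    qed
    have gGs: "g \<in> Gs" unfolding Gs_def using pP qP pq gpe by force
    have "v \<in> Bd" unfolding Bd_def using gGs gab Aa finA vA unfolding A_def by force
    then show False using vK by simp
  qed
  have "infinite (K - (Bd \<union> {c}))" using infK finBd by (simp add: Diff_infinite_finite)
  then obtain c' where c': "c' \<in> K" "c' \<notin> Bd" "c' \<noteq> c" using infinite_imp_nonempty by blast
  have "(adj F)\<^sup>*\<^sup>* c c'" using c'(1) unfolding K_def cmp_def by simp
  then show ?thesis using claim c' unfolding F_def by blast
qed


definition nxt :: "'a set set \<Rightarrow> 'a \<Rightarrow> 'a" where
  "nxt F c = (SOME c'. c' \<noteq> c \<and> (adj F)\<^sup>*\<^sup>* c c' \<and> good F c')"

fun W :: "'a set set \<Rightarrow> 'a \<Rightarrow> (nat \<Rightarrow> 'a set) \<Rightarrow> nat \<Rightarrow> 'a" where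
  "W E v0 h 0 = v0"
| "W E v0 h (Suc k) = nxt (E - h ` {..k}) (W E v0 h k)"

lemma W_cong: "(\<forall>i<k. h' i = h i) \<Longrightarrow> W E v0 h' k = W E v0 h k"
proof (induction k)
  case 0 then show ?case by simp
next
  case (Suc k)
  have "h' ` {..k} = h ` {..k}" using Suc.prems by (auto simp: image_def)
  then show ?case using Suc by simp
qed

lemma step_lemma:
  fixes m :: nat
  assumes sg: "simple_graph V E" and tec: "two_edge_connected V E" and infV: "infinite V"
    and legal: "\<forall>k\<le>m. h k \<in> E - h ` {..<k}" and gd: "good (E - h ` {..<m}) c"
  shows "infinite (cmp (E - h ` {..m}) c) \<and> nxt (E - h ` {..m}) c \<noteq> c \<and>
    (adj (E - h ` {..m}))\<^sup>*\<^sup>* c (nxt (E - h ` {..m}) c) \<and> good (E - h ` {..m}) (nxt (E - h ` {..m}) c)"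
proof -
  have mm: "m \<le> m" by simp
  have hm: "h m \<in> E - h ` {..<m}" using legal mm by blast
  have eq: "E - h ` {..m} = (E - h ` {..<m}) - {h m}"
    by (auto simp: atMost_def lessThan_def le_less)
  have inf: "infinite (cmp (E - h ` {..m}) c)" using gd hm unfolding good_def eq by blast
  have DE: "h ` {..m} \<subseteq> E" using legal by auto
  have "\<exists>c'. c' \<noteq> c \<and> (adj (E - h ` {..m}))\<^sup>*\<^sup>* c c' \<and> good (E - h ` {..m}) c'"
    by (rule exists_good[OF sg tec infV _ DE inf]) simp
  then have "nxt (E - h ` {..m}) c \<noteq> c \<and> (adj (E - h ` {..m}))\<^sup>*\<^sup>* c (nxt (E - h ` {..m}) c) \<and>
     good (E - h ` {..m}) (nxt (E - h ` {..m}) c)"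
    unfolding nxt_def by (rule someI_ex)
  then show ?thesis using inf by blast
qed

lemma inv_lemma:
  assumes sg: "simple_graph V E" and tec: "two_edge_connected V E" and infV: "infinite V"
    and legal: "\<forall>k\<le>n. h k \<in> E - h ` {..<k}" and g0: "good E v0"
  shows "m \<le> Suc n \<Longrightarrow> good (E - h ` {..<m}) (W E v0 h m)"
proof (induction m)
  case 0 then show ?case using g0 by simp
next
  case (Suc m)
  have lm: "\<forall>k\<le>m. h k \<in> E - h ` {..<k}" using legal Suc.prems by auto
  have "good (E - h ` {..m}) (nxt (E - h ` {..m}) (W E v0 h m))"
    using step_lemma[OF sg tec infV lm Suc.IH] Suc.prems by simp
  then show ?case by (simp add: lessThan_Suc_atMost)
qed

theorem mainTheorem13:
  fixes V :: "'a set" and E :: "'a set set"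
  assumes "simple_graph V E" and "infinite V" and "two_edge_connected V E"
  shows "cat_win V E"
proof -
  note sg = assms(1) and infV = assms(2) and tec = assms(3)
  obtain v0 where v0: "v0 \<in> V" using infV infinite_imp_nonempty by blast
  have gc: "graph_connected V E" using tec unfolding two_edge_connected_def by blast
  have g0: "good E v0" unfolding good_def
  proof
    fix g assume "g \<in> E"
    have "V \<subseteq> cmp (E - {g}) v0" unfolding cmp_def using conn_reach[OF conn_minus[OF tec] v0] by auto
    then show "infinite (cmp (E - {g}) v0)" using infV finite_subset by blast
  qed
  have noniso: "\<not> isolated F c" if "infinite (cmp F c)" for F :: "'a set set" and c :: 'a
  proof -
    have "infinite (cmp F c - {c})" using that by simp
    then obtain y where "y \<in> cmp F c - {c}" using infinite_imp_nonempty by blast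
    then have r: "(adj F)\<^sup>*\<^sup>* c y" and ne: "c \<noteq> y" unfolding cmp_def by auto
    obtain z where "adj F c z" using reach_start[OF r ne] by blast
    then show ?thesis unfolding adj_def isolated_def by blast
  qed
  have i0: "\<not> isolated E v0"
  proof -
    have "V \<subseteq> cmp E v0" unfolding cmp_def using conn_reach[OF gc v0] by auto
    then have "infinite (cmp E v0)" using infV finite_subset by blast
    then show ?thesis by (rule noniso)
  qed
  define \<sigma> where "\<sigma> hs = W E v0 (\<lambda>i. hs ! i) (length hs)" for hs
  have cp: "cat_pos v0 \<sigma> h n = W E v0 h n" for h n
  proof (cases n)
    case 0 then show ?thesis by simp
  next
    case (Suc k)
    have "W E v0 (\<lambda>i. map h [0..<Suc k] ! i) (Suc k) = W E v0 h (Suc k)"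
      by (rule W_cong) (simp del: upt_Suc add: nth_map)
    then show ?thesis using Suc unfolding \<sigma>_def by simp
  qed
  have "cat_winning_strategy V E v0 \<sigma>"
    unfolding cat_winning_strategy_def Let_def
  proof (intro conjI v0 i0 allI impI)
    fix h :: "nat \<Rightarrow> 'a set" and n :: nat assume legal: "\<forall>k\<le>n. h k \<in> E - h ` {..<k}"
    have gd: "good (E - h ` {..<n}) (W E v0 h n)"
      using inv_lemma[OF sg tec infV legal g0] by simp
    note st = step_lemma[OF sg tec infV legal gd]
    have "\<not> isolated (E - h ` {..n}) (W E v0 h n)" using noniso conjunct1[OF st] by blast
    moreover have "\<exists>p. is_path (E - h ` {..n}) p (W E v0 h n) (W E v0 h (Suc n))"
    proof -
      have ne: "W E v0 h n \<noteq> nxt (E - h ` {..n}) (W E v0 h n)" using st by metis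
      have r: "(adj (E - h ` {..n}))\<^sup>*\<^sup>* (W E v0 h n) (nxt (E - h ` {..n}) (W E v0 h n))" using st by blast
      show ?thesis using path_of_reach[OF r ne] by simp
    qed
    ultimately have "\<not> isolated (E - h ` {..n}) (cat_pos v0 \<sigma> h n) \<and>
      (\<exists>p. is_path (E - h ` {..n}) p (cat_pos v0 \<sigma> h n) (cat_pos v0 \<sigma> h (Suc n)))"
      unfolding cp W.simps(2) by blast
    then show "\<not> isolated (E - h ` {..n}) (cat_pos v0 \<sigma> h n)"
      "\<exists>p. is_path (E - h ` {..n}) p (cat_pos v0 \<sigma> h n) (cat_pos v0 \<sigma> h (Suc n))" by auto
  qed
  then show ?thesis unfolding cat_win_def by blast
qed

end
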